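(* Let $\mathcal{I}$ be an interval hypergraph on $[n]$ closed under intersection. Then $P_{\mathcal{I}}$ is a lattice, and for acyclic orientations $A,B$ of $\mathcal{I}$, \[ A\vee B=\mathrm{Or}_{\sigma_A\vee\sigma_B}\quad\text{and}\quad A\wedge B=\mathrm{Or}_{\tau_A\wedge\tau_B}, \] where the joins and meets on the right are taken in the weak order on permutations of $[n]$.
   Context: An interval hypergraph $\mathcal{I}$ on $[n]$ is a collection of intervals of $[n]$ containing all singletons; it is closed under intersection if $I,J\in\mathcal{I}$, $I\cap J\ne\varnothing$ imply $I\cap J\in\mathcal{I}$. An orientation is a map $O:\mathcal{I}\to[n]$ with $O(I)\in I$; it is acyclic if there are no $H_1,\dots,H_k$, $k\ge2$, with $O(H_{i+1})\in H_i\setminus\{O(H_i)\}$ for $i\in[k-1]$ and $O(H_1)\in H_k\setminus\{O(H_k)\}$. Orientations $O\ne O'$ are related by an increasing flip (from $O$ to $O'$) if there exist $1\le i<j\le n$ such that for all $H$: if $O(H)\ne O'(H)$ then $O(H)=i$, $O'(H)=j$; and if $\{i,j\}\subseteq H$ then $O(H)=i\iff O'(H)=j$. $P_{\mathcal{I}}$ is the transitive closure of the increasing flip relation on acyclic orientations. For a permutation $\pi$ of $[n]$, $\mathrm{Or}_\pi(I)=\pi(\min\{j:\pi(j)\in I\})$; for each acyclic orientation $A$ the fiber $\{\pi:\mathrm{Or}_\pi=A\}$ is an interval $[\sigma_A,\tau_A]$ of the weak order. *)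

theory Defs
  imports "HOL-Combinatorics.Permutations"
begin

definition interval_hypergraph :: "nat \<Rightarrow> nat set set \<Rightarrow> bool" where
  "interval_hypergraph n \<I> \<longleftrightarrow>
     (\<forall>H\<in>\<I>. \<exists>a b. 1 \<le> a \<and> a \<le> b \<and> b \<le> n \<and> H = {a..b}) \<and>
     (\<forall>i\<in>{1..n}. {i} \<in> \<I>)"

definition closed_under_intersection :: "nat set set \<Rightarrow> bool" where
  "closed_under_intersection \<I> \<longleftrightarrow>
     (\<forall>I\<in>\<I>. \<forall>J\<in>\<I>. I \<inter> J \<noteq> {} \<longrightarrow> I \<inter> J \<in> \<I>)"

text \<open>An orientation is a map Q with Q(H) \<in> H for H \<in> \<I>; to make equality of
  orientations extensional we fix the convention Q(H) = 0 outside \<I>.\<close>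
definition orientation :: "nat set set \<Rightarrow> (nat set \<Rightarrow> nat) \<Rightarrow> bool" where
  "orientation \<I> Q \<longleftrightarrow> (\<forall>H\<in>\<I>. Q H \<in> H) \<and> (\<forall>H. H \<notin> \<I> \<longrightarrow> Q H = 0)"

definition acyclic_orientation :: "nat set set \<Rightarrow> (nat set \<Rightarrow> nat) \<Rightarrow> bool" where
  "acyclic_orientation \<I> Q \<longleftrightarrow> orientation \<I> Q \<and>
     \<not> (\<exists>k (Hs :: nat \<Rightarrow> nat set). k \<ge> 2 \<and> (\<forall>i. 1 \<le> i \<and> i \<le> k \<longrightarrow> Hs i \<in> \<I>) \<and>
          (\<forall>i. 1 \<le> i \<and> i < k \<longrightarrow> Q (Hs (Suc i)) \<in> Hs i - {Q (Hs i)}) \<and>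
          Q (Hs 1) \<in> Hs k - {Q (Hs k)})"

definition increasing_flip :: "nat \<Rightarrow> nat set set \<Rightarrow> (nat set \<Rightarrow> nat) \<Rightarrow> (nat set \<Rightarrow> nat) \<Rightarrow> bool" where
  "increasing_flip n \<I> Q Q' \<longleftrightarrow> Q \<noteq> Q' \<and>
     (\<exists>i j. 1 \<le> i \<and> i < j \<and> j \<le> n \<and>
        (\<forall>H\<in>\<I>. (Q H \<noteq> Q' H \<longrightarrow> Q H = i \<and> Q' H = j) \<and>
                 ({i, j} \<subseteq> H \<longrightarrow> (Q H = i \<longleftrightarrow> Q' H = j))))"

definition P_le :: "nat \<Rightarrow> nat set set \<Rightarrow> (nat set \<Rightarrow> nat) \<Rightarrow> (nat set \<Rightarrow> nat) \<Rightarrow> bool" where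
  "P_le n \<I> = (\<lambda>Q Q'. acyclic_orientation \<I> Q \<and> acyclic_orientation \<I> Q' \<and> increasing_flip n \<I> Q Q')\<^sup>*\<^sup>*"

definition Or_perm :: "nat \<Rightarrow> nat set set \<Rightarrow> (nat \<Rightarrow> nat) \<Rightarrow> (nat set \<Rightarrow> nat)" where
  "Or_perm n \<I> \<pi> = (\<lambda>H. if H \<in> \<I> then \<pi> (Min {j \<in> {1..n}. \<pi> j \<in> H}) else 0)"

text \<open>Weak order on permutations of [n] (in one-line notation \<pi>(1)...\<pi>(n)):
  inclusion of the inversion sets (pairs of values a<b with b before a).\<close>
definition inversions :: "nat \<Rightarrow> (nat \<Rightarrow> nat) \<Rightarrow> (nat \<times> nat) set" where
  "inversions n \<pi> = {(a, b). 1 \<le> a \<and> a < b \<and> b \<le> n \<and> inv \<pi> b < inv \<pi> a}"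

definition weak_le :: "nat \<Rightarrow> (nat \<Rightarrow> nat) \<Rightarrow> (nat \<Rightarrow> nat) \<Rightarrow> bool" where
  "weak_le n \<pi> \<rho> \<longleftrightarrow> inversions n \<pi> \<subseteq> inversions n \<rho>"

definition is_lub_on :: "'a set \<Rightarrow> ('a \<Rightarrow> 'a \<Rightarrow> bool) \<Rightarrow> 'a \<Rightarrow> 'a \<Rightarrow> 'a \<Rightarrow> bool" where
  "is_lub_on S le z x y \<longleftrightarrow> z \<in> S \<and> le x z \<and> le y z \<and>
     (\<forall>w\<in>S. le x w \<and> le y w \<longrightarrow> le z w)"

definition is_glb_on :: "'a set \<Rightarrow> ('a \<Rightarrow> 'a \<Rightarrow> bool) \<Rightarrow> 'a \<Rightarrow> 'a \<Rightarrow> 'a \<Rightarrow> bool" where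
  "is_glb_on S le z x y \<longleftrightarrow> z \<in> S \<and> le z x \<and> le z y \<and>
     (\<forall>w\<in>S. le w x \<and> le w y \<longrightarrow> le w z)"

definition perms :: "nat \<Rightarrow> (nat \<Rightarrow> nat) set" where
  "perms n = {\<pi>. \<pi> permutes {1..n}}"

definition fiber :: "nat \<Rightarrow> nat set set \<Rightarrow> (nat set \<Rightarrow> nat) \<Rightarrow> (nat \<Rightarrow> nat) set" where
  "fiber n \<I> A = {\<pi> \<in> perms n. Or_perm n \<I> \<pi> = A}"

definition sigma_of :: "nat \<Rightarrow> nat set set \<Rightarrow> (nat set \<Rightarrow> nat) \<Rightarrow> (nat \<Rightarrow> nat)" where
  "sigma_of n \<I> A = (THE \<sigma>. \<sigma> \<in> fiber n \<I> A \<and> (\<forall>\<pi>\<in>fiber n \<I> A. weak_le n \<sigma> \<pi>))"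

definition tau_of :: "nat \<Rightarrow> nat set set \<Rightarrow> (nat set \<Rightarrow> nat) \<Rightarrow> (nat \<Rightarrow> nat)" where
  "tau_of n \<I> A = (THE \<tau>. \<tau> \<in> fiber n \<I> A \<and> (\<forall>\<pi>\<in>fiber n \<I> A. weak_le n \<pi> \<tau>))"

end

theory Submission
  imports Defs
begin

definition Pr :: "nat \<Rightarrow> (nat \<times> nat) set" where
  "Pr n = {(a, b). 1 \<le> a \<and> a < b \<and> b \<le> n}"

definition cotrans :: "(nat \<times> nat) set \<Rightarrow> bool" where
  "cotrans T \<longleftrightarrow> (\<forall>a b c. (a, c) \<in> T \<and> a < b \<and> b < c \<longrightarrow> (a, b) \<in> T \<or> (b, c) \<in> T)"

definition tc :: "nat \<Rightarrow> (nat \<times> nat) set \<Rightarrow> bool" where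
  "tc n T \<longleftrightarrow> T \<subseteq> Pr n \<and> trans T \<and> cotrans T"

lemma finite_Pr: "finite (Pr n)"
  by (rule finite_subset[of _ "{1..n} \<times> {1..n}"]) (auto simp: Pr_def)

lemma trancl_less:
  fixes R :: "(nat \<times> nat) set"
  assumes "R \<subseteq> {(a, b). a < b}" "(x, y) \<in> R\<^sup>+"
  shows "x < y"
  using assms(2) proof induction
  case (base y) then show ?case using assms(1) by blast
next
  case (step y z) then show ?case using assms(1) by fastforce
qed

lemma rtrancl_le:
  fixes R :: "(nat \<times> nat) set"
  assumes "R \<subseteq> {(a, b). a < b}" "(x, y) \<in> R\<^sup>*"
  shows "x \<le> y"
  using assms(2) proof induction
  case base then show ?case by simp
next
  case (step y z) then show ?case using assms(1) by fastforce
qed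

lemma cotrans_trancl:
  assumes R: "R \<subseteq> {(a, b). (a::nat) < b}" and C: "cotrans R"
  shows "cotrans (R\<^sup>+)"
  unfolding cotrans_def
proof (intro allI impI)
  fix a b c assume h: "(a, c) \<in> R\<^sup>+ \<and> a < b \<and> b < c"
  have "(a, c) \<in> R\<^sup>+ \<Longrightarrow> \<forall>b. a < b \<and> b < c \<longrightarrow> (a, b) \<in> R\<^sup>+ \<or> (b, c) \<in> R\<^sup>+"
  proof (induction rule: trancl_induct)
    case (base y)
    then show ?case using C unfolding cotrans_def by blast
  next
    case (step y z)
    have ay: "a < y" using trancl_less[OF R step.hyps(1)] .
    show ?case
    proof (intro allI impI)
      fix b assume b: "a < b \<and> b < z"
      consider "b < y" | "b = y" | "y < b" by linarith
      then show "(a, b) \<in> R\<^sup>+ \<or> (b, z) \<in> R\<^sup>+"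
      proof cases
        case 1
        then show ?thesis using step.IH b step.hyps(2) ay
          by (meson trancl.simps)
      next
        case 2
        then show ?thesis using step.hyps(1) by blast
      next
        case 3
        then have "(y, b) \<in> R \<or> (b, z) \<in> R" using C step.hyps(2) b unfolding cotrans_def by blast
        then show ?thesis using step.hyps(1) by auto
      qed
    qed
  qed
  then show "(a, b) \<in> R\<^sup>+ \<or> (b, c) \<in> R\<^sup>+" using h by blast
qed

lemma tc_less: "tc n T \<Longrightarrow> T \<subseteq> {(a, b). a < b}"
  unfolding tc_def Pr_def by auto

lemma tc_join:
  assumes "tc n T1" "tc n T2"
  shows "tc n ((T1 \<union> T2)\<^sup>+)"
proof -
  have sub: "T1 \<union> T2 \<subseteq> Pr n" using assms unfolding tc_def by auto
  have "(T1 \<union> T2)\<^sup>+ \<subseteq> Pr n"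
  proof (rule subrelI)
    fix x y assume "(x, y) \<in> (T1 \<union> T2)\<^sup>+"
    then show "(x, y) \<in> Pr n"
    proof (induction rule: trancl_induct)
      case (base y) then show ?case using sub by auto
    next
      case (step y z) then show ?case using sub unfolding Pr_def by auto
    qed
  qed
  moreover have "cotrans (T1 \<union> T2)"
    using assms unfolding tc_def cotrans_def by blast
  moreover have "T1 \<union> T2 \<subseteq> {(a, b). a < b}" using sub unfolding Pr_def by auto
  ultimately show ?thesis unfolding tc_def using cotrans_trancl by auto
qed

lemma tc_compl:
  assumes "tc n T"
  shows "tc n (Pr n - T)"
proof -
  have t: "trans T" and c: "cotrans T" and s: "T \<subseteq> Pr n" using assms unfolding tc_def by auto
  have "trans (Pr n - T)"
    unfolding trans_def
  proof (intro allI impI)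
    fix x y z assume "(x, y) \<in> Pr n - T" "(y, z) \<in> Pr n - T"
    then show "(x, z) \<in> Pr n - T" using c unfolding cotrans_def Pr_def by auto
  qed
  moreover have "cotrans (Pr n - T)"
    unfolding cotrans_def
  proof (intro allI impI)
    fix a b c assume h: "(a, c) \<in> Pr n - T \<and> a < b \<and> b < c"
    then have "(a, b) \<in> Pr n" "(b, c) \<in> Pr n" unfolding Pr_def by auto
    moreover have "\<not> ((a, b) \<in> T \<and> (b, c) \<in> T)" using t h unfolding trans_def by blast
    ultimately show "(a, b) \<in> Pr n - T \<or> (b, c) \<in> Pr n - T" by blast
  qed
  ultimately show ?thesis unfolding tc_def by auto
qed

lemma inv_tc:
  assumes "\<pi> \<in> perms n"
  shows "tc n (inversions n \<pi>)"
  unfolding tc_def cotrans_def trans_def inversions_def Pr_def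
  by (auto; meson not_less_iff_gr_or_eq order.strict_trans leI le_less_trans)


definition bef :: "(nat \<times> nat) set \<Rightarrow> nat \<Rightarrow> nat \<Rightarrow> bool" where
  "bef T x y \<longleftrightarrow> (x < y \<and> (x, y) \<notin> T) \<or> (y < x \<and> (y, x) \<in> T)"

definition rank :: "nat \<Rightarrow> (nat \<times> nat) set \<Rightarrow> nat \<Rightarrow> nat" where
  "rank n T x = Suc (card {y \<in> {1..n}. bef T y x})"

lemma perms_permutes: "\<pi> \<in> perms n \<Longrightarrow> \<pi> permutes {1..n}"
  unfolding perms_def by auto

lemma pos_bef:
  assumes "\<pi> \<in> perms n" "x \<in> {1..n}" "y \<in> {1..n}"
  shows "(inv \<pi> x < inv \<pi> y) \<longleftrightarrow> bef (inversions n \<pi>) x y"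
proof -
  have p: "\<pi> permutes {1..n}" using assms perms_permutes by auto
  have inj: "inv \<pi> x = inv \<pi> y \<Longrightarrow> x = y"
    by (metis p permutes_inverses(1))
  consider "x < y" | "x = y" | "y < x" by linarith
  then show ?thesis
  proof cases
    case 1
    then have "inv \<pi> x \<noteq> inv \<pi> y" using inj by auto
    then show ?thesis using 1 assms unfolding bef_def inversions_def by auto
  next
    case 2 then show ?thesis unfolding bef_def by auto
  next
    case 3
    then have "inv \<pi> x \<noteq> inv \<pi> y" using inj by auto
    then show ?thesis using 3 assms unfolding bef_def inversions_def by auto
  qed
qed

lemma bij_rank:
  assumes f: "f permutes {1..n}" and x: "x \<in> {1..n}"
  shows "f x = Suc (card {y \<in> {1..n}. f y < f x})"
proof -
  have fx: "f x \<in> {1..n}" using permutes_in_image[OF f] x by blast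
  have im: "f ` {y \<in> {1..n}. f y < f x} = {1..<f x}"
  proof (intro equalityI subsetI)
    fix j assume "j \<in> f ` {y \<in> {1..n}. f y < f x}"
    then obtain y where "y \<in> {1..n}" "f y < f x" "j = f y" by blast
    then show "j \<in> {1..<f x}" using permutes_in_image[OF f, of y] by simp
  next
    fix j assume j: "j \<in> {1..<f x}"
    then have jn: "j \<in> {1..n}" using fx by simp
    have "inv f j \<in> {1..n}" using jn permutes_in_image[OF permutes_inv[OF f]] by blast
    moreover have "f (inv f j) = j" using permutes_inverses(1)[OF f] .
    ultimately show "j \<in> f ` {y \<in> {1..n}. f y < f x}" using j
      by (intro image_eqI[of _ _ "inv f j"]) auto
  qed
  have "inj_on f {y \<in> {1..n}. f y < f x}"
    using permutes_inj_on[OF f] .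
  then have "card (f ` {y \<in> {1..n}. f y < f x}) = card {y \<in> {1..n}. f y < f x}"
    by (rule card_image)
  then have "card {y \<in> {1..n}. f y < f x} = f x - 1" using im by simp
  then show ?thesis using fx by simp
qed

lemma inv_rank:
  assumes "\<pi> \<in> perms n" "x \<in> {1..n}"
  shows "inv \<pi> x = rank n (inversions n \<pi>) x"
proof -
  have p: "inv \<pi> permutes {1..n}" using assms perms_permutes permutes_inv by blast
  have "inv \<pi> x = Suc (card {y \<in> {1..n}. inv \<pi> y < inv \<pi> x})"
    using bij_rank[OF p assms(2)] .
  also have "{y \<in> {1..n}. inv \<pi> y < inv \<pi> x} = {y \<in> {1..n}. bef (inversions n \<pi>) y x}"
    using pos_bef[OF assms(1) _ assms(2)] by auto
  finally show ?thesis unfolding rank_def .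
qed

lemma inv_inj:
  assumes "\<pi> \<in> perms n" "\<rho> \<in> perms n" "inversions n \<pi> = inversions n \<rho>"
  shows "\<pi> = \<rho>"
proof -
  have p: "\<pi> permutes {1..n}" and r: "\<rho> permutes {1..n}" using assms perms_permutes by auto
  have "inv \<pi> = inv \<rho>"
  proof
    fix x show "inv \<pi> x = inv \<rho> x"
    proof (cases "x \<in> {1..n}")
      case True then show ?thesis using inv_rank assms by metis
    next
      case False then show ?thesis
        using permutes_inv[OF p] permutes_inv[OF r] unfolding permutes_def by auto
    qed
  qed
  then show ?thesis using permutes_inv_inv[OF p] permutes_inv_inv[OF r] by metis
qed

lemma weak_antisym:
  assumes "\<pi> \<in> perms n" "\<rho> \<in> perms n" "weak_le n \<pi> \<rho>" "weak_le n \<rho> \<pi>"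
  shows "\<pi> = \<rho>"
  using assms inv_inj unfolding weak_le_def by blast

lemma bef_trans:
  assumes "tc n T" "bef T x y" "bef T y z"
  shows "bef T x z"
proof -
  have t: "\<And>a b c. (a, b) \<in> T \<Longrightarrow> (b, c) \<in> T \<Longrightarrow> (a, c) \<in> T"
    using assms(1) unfolding tc_def trans_def by blast
  have c: "\<And>a b c. (a, c) \<in> T \<Longrightarrow> a < b \<Longrightarrow> b < c \<Longrightarrow> (a, b) \<in> T \<or> (b, c) \<in> T"
    using assms(1) unfolding tc_def cotrans_def by blast
  consider "x < y" "y < z" | "x < z" "z < y" | "y < x" "x < z" | "y < z" "z < x"
    | "z < x" "x < y" | "z < y" "y < x" | "x = z"
    using assms(2,3) unfolding bef_def by linarith
  then show ?thesis
  proof cases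
    case 1 then show ?thesis using assms(2,3) c unfolding bef_def by auto
  next
    case 2 then show ?thesis using assms(2,3) t unfolding bef_def by auto
  next
    case 3 then show ?thesis using assms(2,3) t unfolding bef_def by auto
  next
    case 4 then show ?thesis using assms(2,3) c unfolding bef_def by auto
  next
    case 5 then show ?thesis using assms(2,3) c unfolding bef_def by auto
  next
    case 6 then show ?thesis using assms(2,3) t unfolding bef_def by auto
  next
    case 7 then show ?thesis using assms(2,3) unfolding bef_def by auto
  qed
qed

lemma bef_irrefl: "\<not> bef T x x" unfolding bef_def by auto

lemma bef_total: "x \<noteq> y \<Longrightarrow> bef T x y \<or> bef T y x" unfolding bef_def by auto

lemma bef_asym: "bef T x y \<Longrightarrow> \<not> bef T y x" unfolding bef_def by auto

lemma rank_less:
  assumes "tc n T" "bef T x y" "x \<in> {1..n}"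
  shows "rank n T x < rank n T y"
proof -
  have "{z \<in> {1..n}. bef T z x} \<subset> {z \<in> {1..n}. bef T z y}"
    using bef_trans[OF assms(1) _ assms(2)] assms(2,3) bef_irrefl by blast
  then show ?thesis unfolding rank_def by (simp add: psubset_card_mono)
qed

lemma rank_range:
  assumes "x \<in> {1..n}"
  shows "rank n T x \<in> {1..n}"
proof -
  have "{z \<in> {1..n}. bef T z x} \<subseteq> {1..n} - {x}" using bef_irrefl by auto
  then have "card {z \<in> {1..n}. bef T z x} \<le> card ({1..n} - {x})"
    by (intro card_mono) auto
  also have "\<dots> = n - 1" using assms by simp
  finally show ?thesis unfolding rank_def using assms by auto
qed

lemma tc_perm:
  assumes T: "tc n T"
  shows "\<exists>\<pi> \<in> perms n. inversions n \<pi> = T"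
proof -
  define \<rho> where "\<rho> x = (if x \<in> {1..n} then rank n T x else x)" for x
  have inj: "inj_on \<rho> {1..n}"
  proof (rule inj_onI)
    fix x y assume xy: "x \<in> {1..n}" "y \<in> {1..n}" "\<rho> x = \<rho> y"
    show "x = y"
    proof (rule ccontr)
      assume "x \<noteq> y"
      then consider "bef T x y" | "bef T y x" using bef_total by blast
      then show False using rank_less[OF T] xy unfolding \<rho>_def by (cases; fastforce)
    qed
  qed
  have sub: "\<rho> ` {1..n} \<subseteq> {1..n}" using rank_range unfolding \<rho>_def by auto
  have "\<rho> ` {1..n} = {1..n}" using endo_inj_surj[OF _ sub inj] by simp
  then have "bij_betw \<rho> {1..n} {1..n}" using inj unfolding bij_betw_def by auto
  then have rp: "\<rho> permutes {1..n}" by (rule bij_imp_permutes) (auto simp add: \<rho>_def)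
  define \<pi> where "\<pi> = inv \<rho>"
  have pp: "\<pi> \<in> perms n" using permutes_inv[OF rp] unfolding \<pi>_def perms_def by auto
  have ip: "inv \<pi> = \<rho>" unfolding \<pi>_def using permutes_inv_inv[OF rp] .
  have "inversions n \<pi> = T"
  proof
    show "inversions n \<pi> \<subseteq> T"
    proof
      fix p assume "p \<in> inversions n \<pi>"
      then obtain a b where p: "p = (a, b)" "1 \<le> a" "a < b" "b \<le> n" "\<rho> b < \<rho> a"
        unfolding inversions_def ip by auto
      have "\<not> bef T a b"
        using rank_less[OF T, of a b] p unfolding \<rho>_def by auto
      then show "p \<in> T" using p unfolding bef_def by auto
    qed
  next
    show "T \<subseteq> inversions n \<pi>"
    proof
      fix p assume "p \<in> T"
      then obtain a b where p: "p = (a, b)" "1 \<le> a" "a < b" "b \<le> n" "(a, b) \<in> T"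
        using T unfolding tc_def Pr_def by auto
      then have "bef T b a" unfolding bef_def by auto
      then have "\<rho> b < \<rho> a" using rank_less[OF T, of b a] p unfolding \<rho>_def by auto
      then show "p \<in> inversions n \<pi>" using p unfolding inversions_def ip by auto
    qed
  qed
  then show ?thesis using pp by blast
qed

lemma weak_trans_inv: "\<pi> \<in> perms n \<Longrightarrow> trans (inversions n \<pi>)"
  using inv_tc unfolding tc_def by blast

lemma weak_join:
  assumes "\<pi>1 \<in> perms n" "\<pi>2 \<in> perms n"
  shows "\<exists>\<pi>. is_lub_on (perms n) (weak_le n) \<pi> \<pi>1 \<pi>2"
proof -
  obtain \<pi> where p: "\<pi> \<in> perms n" "inversions n \<pi> = (inversions n \<pi>1 \<union> inversions n \<pi>2)\<^sup>+"
    using tc_perm[OF tc_join[OF inv_tc[OF assms(1)] inv_tc[OF assms(2)]]] by blast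
  have "is_lub_on (perms n) (weak_le n) \<pi> \<pi>1 \<pi>2"
    unfolding is_lub_on_def weak_le_def
  proof (intro conjI ballI impI)
    fix w assume w: "w \<in> perms n" "inversions n \<pi>1 \<subseteq> inversions n w \<and> inversions n \<pi>2 \<subseteq> inversions n w"
    have "(inversions n \<pi>1 \<union> inversions n \<pi>2)\<^sup>+ \<subseteq> (inversions n w)\<^sup>+"
      using w by (intro trancl_mono_subset) auto
    also have "\<dots> = inversions n w" using weak_trans_inv[OF w(1)] by simp
    finally show "inversions n \<pi> \<subseteq> inversions n w" using p by simp
  qed (use p in auto)
  then show ?thesis by blast
qed

lemma weak_meet:
  assumes "\<pi>1 \<in> perms n" "\<pi>2 \<in> perms n"
  shows "\<exists>\<pi>. is_glb_on (perms n) (weak_le n) \<pi> \<pi>1 \<pi>2"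
proof -
  let ?C1 = "Pr n - inversions n \<pi>1" and ?C2 = "Pr n - inversions n \<pi>2"
  have t: "tc n (Pr n - (?C1 \<union> ?C2)\<^sup>+)"
    using tc_compl[OF tc_join[OF tc_compl[OF inv_tc[OF assms(1)]] tc_compl[OF inv_tc[OF assms(2)]]]] .
  obtain \<pi> where p: "\<pi> \<in> perms n" "inversions n \<pi> = Pr n - (?C1 \<union> ?C2)\<^sup>+"
    using tc_perm[OF t] by blast
  have s1: "inversions n \<pi>1 \<subseteq> Pr n" "inversions n \<pi>2 \<subseteq> Pr n"
    using inv_tc assms unfolding tc_def by blast+
  have "is_glb_on (perms n) (weak_le n) \<pi> \<pi>1 \<pi>2"
    unfolding is_glb_on_def weak_le_def
  proof (intro conjI ballI impI)
    show "inversions n \<pi> \<subseteq> inversions n \<pi>1" using p s1 by auto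
    show "inversions n \<pi> \<subseteq> inversions n \<pi>2" using p s1 by auto
  next
    fix w assume w: "w \<in> perms n" "inversions n w \<subseteq> inversions n \<pi>1 \<and> inversions n w \<subseteq> inversions n \<pi>2"
    have tw: "trans (Pr n - inversions n w)"
      using tc_compl[OF inv_tc[OF w(1)]] unfolding tc_def by blast
    have "(?C1 \<union> ?C2)\<^sup>+ \<subseteq> (Pr n - inversions n w)\<^sup>+"
      using w by (intro trancl_mono_subset) auto
    also have "\<dots> = Pr n - inversions n w" using tw by simp
    finally show "inversions n w \<subseteq> inversions n \<pi>"
      using p inv_tc[OF w(1)] unfolding tc_def by auto
  qed (use p in auto)
  then show ?thesis by blast
qed


lemma IH_sub:
  assumes "interval_hypergraph n \<I>" "H \<in> \<I>"
  shows "H \<subseteq> {1..n}" "finite H" "H \<noteq> {}"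
    "\<And>u v z. u \<in> H \<Longrightarrow> v \<in> H \<Longrightarrow> u \<le> z \<Longrightarrow> z \<le> v \<Longrightarrow> z \<in> H"
  using assms unfolding interval_hypergraph_def by (auto; fastforce)+

lemma Or_basic:
  assumes IH: "interval_hypergraph n \<I>" and H: "H \<in> \<I>" and p: "\<pi> \<in> perms n"
  shows "Or_perm n \<I> \<pi> H \<in> H \<and> (\<forall>y\<in>H. inv \<pi> (Or_perm n \<I> \<pi> H) \<le> inv \<pi> y)"
proof -
  have pp: "\<pi> permutes {1..n}" using p perms_permutes by auto
  have sub: "H \<subseteq> {1..n}" "finite H" "H \<noteq> {}" using IH_sub[OF IH H] by auto
  have S: "{j \<in> {1..n}. \<pi> j \<in> H} = inv \<pi> ` H"
  proof (intro equalityI subsetI)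
    fix j assume "j \<in> {j \<in> {1..n}. \<pi> j \<in> H}"
    then show "j \<in> inv \<pi> ` H" using permutes_inverses(2)[OF pp, of j] by (metis (lifting) image_eqI mem_Collect_eq)
  next
    fix j assume "j \<in> inv \<pi> ` H"
    then obtain x where x: "x \<in> H" "j = inv \<pi> x" by blast
    then have "j \<in> {1..n}" using sub permutes_in_image[OF permutes_inv[OF pp]] by blast
    then show "j \<in> {j \<in> {1..n}. \<pi> j \<in> H}" using x permutes_inverses(1)[OF pp, of x] by simp
  qed
  have fin: "finite (inv \<pi> ` H)" "inv \<pi> ` H \<noteq> {}" using sub by auto
  obtain x where x: "x \<in> H" "Min (inv \<pi> ` H) = inv \<pi> x" using Min_in[OF fin] by blast
  have O: "Or_perm n \<I> \<pi> H = x"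
    unfolding Or_perm_def using H S x permutes_inverses(1)[OF pp, of x] by simp
  have "\<forall>y\<in>H. inv \<pi> x \<le> inv \<pi> y" using x Min_le[OF fin(1)] by (metis image_eqI)
  then show ?thesis using O x by simp
qed

lemma Or_eqI:
  assumes IH: "interval_hypergraph n \<I>" and H: "H \<in> \<I>" and p: "\<pi> \<in> perms n"
    and x: "x \<in> H" "\<forall>y\<in>H. inv \<pi> x \<le> inv \<pi> y"
  shows "Or_perm n \<I> \<pi> H = x"
proof -
  have pp: "\<pi> permutes {1..n}" using p perms_permutes by auto
  note b = Or_basic[OF IH H p]
  have "inv \<pi> x = inv \<pi> (Or_perm n \<I> \<pi> H)" using b x by (meson order_antisym)
  then show ?thesis by (metis pp permutes_inverses(1))
qed

lemma Or_out: "H \<notin> \<I> \<Longrightarrow> Or_perm n \<I> \<pi> H = 0"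
  unfolding Or_perm_def by simp

lemma Or_AO:
  assumes IH: "interval_hypergraph n \<I>" and p: "\<pi> \<in> perms n"
  shows "acyclic_orientation \<I> (Or_perm n \<I> \<pi>)"
proof -
  have pp: "\<pi> permutes {1..n}" using p perms_permutes by auto
  let ?O = "Or_perm n \<I> \<pi>"
  have ori: "orientation \<I> ?O" unfolding orientation_def using Or_basic[OF IH _ p] Or_out by blast
  have lt: "inv \<pi> (?O G) < inv \<pi> (?O G')" if "G \<in> \<I>" "?O G' \<in> G - {?O G}" for G G'
  proof -
    have "inv \<pi> (?O G) \<le> inv \<pi> (?O G')" using Or_basic[OF IH that(1) p] that(2) by blast
    moreover have "inv \<pi> (?O G) \<noteq> inv \<pi> (?O G')" using that(2) by (metis Diff_iff insertI1 pp permutes_inverses(1))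
    ultimately show ?thesis by simp
  qed
  show ?thesis unfolding acyclic_orientation_def
  proof (intro conjI ori notI)
    assume "\<exists>k Hs. 2 \<le> k \<and> (\<forall>i. 1 \<le> i \<and> i \<le> k \<longrightarrow> Hs i \<in> \<I>) \<and>
          (\<forall>i. 1 \<le> i \<and> i < k \<longrightarrow> ?O (Hs (Suc i)) \<in> Hs i - {?O (Hs i)}) \<and>
          ?O (Hs 1) \<in> Hs k - {?O (Hs k)}"
    then obtain k Hs where k: "2 \<le> k" "\<forall>i. 1 \<le> i \<and> i \<le> k \<longrightarrow> Hs i \<in> \<I>"
      "\<forall>i. 1 \<le> i \<and> i < k \<longrightarrow> ?O (Hs (Suc i)) \<in> Hs i - {?O (Hs i)}"
      "?O (Hs 1) \<in> Hs k - {?O (Hs k)}" by blast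
    have step: "m < k \<Longrightarrow> inv \<pi> (?O (Hs 1)) \<le> inv \<pi> (?O (Hs (Suc m)))" for m
    proof (induction m)
      case 0 then show ?case by simp
    next
      case (Suc m)
      then have "inv \<pi> (?O (Hs (Suc m))) < inv \<pi> (?O (Hs (Suc (Suc m))))"
        using lt k(2,3) by simp
      then show ?case using Suc by simp
    qed
    have "inv \<pi> (?O (Hs 1)) \<le> inv \<pi> (?O (Hs k))" using step[of "k - 1"] k(1) by simp
    moreover have "inv \<pi> (?O (Hs k)) < inv \<pi> (?O (Hs 1))" using lt k(2,4) k(1) by simp
    ultimately show False by simp
  qed
qed

lemma hered:
  assumes A: "acyclic_orientation \<I> Q" and K: "K \<in> \<I>" and G: "G \<in> \<I>" and KG: "K \<subseteq> G"
    and QG: "Q G \<in> K"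
  shows "Q K = Q G"
proof (rule ccontr)
  assume ne: "Q K \<noteq> Q G"
  have QK: "Q K \<in> K" using A K unfolding acyclic_orientation_def orientation_def by blast
  define Hs where "Hs i = (if i = 1 then G else K)" for i :: nat
  have "2 \<le> (2::nat) \<and> (\<forall>i. 1 \<le> i \<and> i \<le> 2 \<longrightarrow> Hs i \<in> \<I>) \<and>
          (\<forall>i. 1 \<le> i \<and> i < 2 \<longrightarrow> Q (Hs (Suc i)) \<in> Hs i - {Q (Hs i)}) \<and>
          Q (Hs 1) \<in> Hs 2 - {Q (Hs 2)}"
    unfolding Hs_def using K G KG QG QK ne by auto
  then show False using A unfolding acyclic_orientation_def by blast
qed

definition chain :: "nat set set \<Rightarrow> (nat set \<Rightarrow> nat) \<Rightarrow> nat \<Rightarrow> nat \<Rightarrow> bool" where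
  "chain \<I> Q x y \<longleftrightarrow> (\<exists>k Hs. 1 \<le> k \<and> (\<forall>i. 1 \<le> i \<and> i \<le> k \<longrightarrow> Hs i \<in> \<I>) \<and>
      (\<forall>i. 1 \<le> i \<and> i < k \<longrightarrow> Q (Hs (Suc i)) \<in> Hs i - {Q (Hs i)}) \<and>
      Q (Hs 1) = x \<and> y \<in> Hs k - {Q (Hs k)})"

lemma chain_base:
  assumes "H \<in> \<I>" "Q H = x" "y \<in> H" "y \<noteq> x"
  shows "chain \<I> Q x y"
  unfolding chain_def
  by (rule exI[of _ 1], rule exI[of _ "\<lambda>_. H"]) (use assms in auto)

lemma chain_trans:
  assumes "chain \<I> Q x y" "chain \<I> Q y z"
  shows "chain \<I> Q x z"
proof -
  obtain k1 Hs where h: "1 \<le> k1" "\<forall>i. 1 \<le> i \<and> i \<le> k1 \<longrightarrow> Hs i \<in> \<I>"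
      "\<forall>i. 1 \<le> i \<and> i < k1 \<longrightarrow> Q (Hs (Suc i)) \<in> Hs i - {Q (Hs i)}"
      "Q (Hs 1) = x" "y \<in> Hs k1 - {Q (Hs k1)}"
    using assms(1) unfolding chain_def by blast
  obtain k2 Gs where g: "1 \<le> k2" "\<forall>i. 1 \<le> i \<and> i \<le> k2 \<longrightarrow> Gs i \<in> \<I>"
      "\<forall>i. 1 \<le> i \<and> i < k2 \<longrightarrow> Q (Gs (Suc i)) \<in> Gs i - {Q (Gs i)}"
      "Q (Gs 1) = y" "z \<in> Gs k2 - {Q (Gs k2)}"
    using assms(2) unfolding chain_def by blast
  define Ks where "Ks i = (if i \<le> k1 then Hs i else Gs (i - k1))" for i
  have 1: "\<forall>i. 1 \<le> i \<and> i \<le> k1 + k2 \<longrightarrow> Ks i \<in> \<I>"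
  proof (intro allI impI)
    fix i assume i: "1 \<le> i \<and> i \<le> k1 + k2"
    show "Ks i \<in> \<I>"
    proof (cases "i \<le> k1")
      case True
      then have "Hs i \<in> \<I>" using h(2) i by blast
      then show ?thesis unfolding Ks_def using True by simp
    next
      case False
      then have "1 \<le> i - k1 \<and> i - k1 \<le> k2" using i by linarith
      then have "Gs (i - k1) \<in> \<I>" using g(2) by blast
      then show ?thesis unfolding Ks_def using False by simp
    qed
  qed
  have 2: "\<forall>i. 1 \<le> i \<and> i < k1 + k2 \<longrightarrow> Q (Ks (Suc i)) \<in> Ks i - {Q (Ks i)}"
  proof (intro allI impI)
    fix i assume i: "1 \<le> i \<and> i < k1 + k2"
    consider "i < k1" | "i = k1" | "k1 < i" by linarith
    then show "Q (Ks (Suc i)) \<in> Ks i - {Q (Ks i)}"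
    proof cases
      case 1 then show ?thesis unfolding Ks_def using h(3) i by auto
    next
      case 2 then show ?thesis unfolding Ks_def using h(5) g(4) by auto
    next
      case 3
      then have e: "Suc i - k1 = Suc (i - k1)" by simp
      have "1 \<le> i - k1 \<and> i - k1 < k2" using i 3 by linarith
      then have "Q (Gs (Suc (i - k1))) \<in> Gs (i - k1) - {Q (Gs (i - k1))}" using g(3) by blast
      then show ?thesis unfolding Ks_def using 3 e by simp
    qed
  qed
  have 3: "Q (Ks 1) = x" unfolding Ks_def using h(1,4) by auto
  have 4: "z \<in> Ks (k1 + k2) - {Q (Ks (k1 + k2))}" unfolding Ks_def using g(1,5) by auto
  show ?thesis unfolding chain_def
    by (rule exI[of _ "k1 + k2"], rule exI[of _ Ks]) (use 1 2 3 4 h(1) in auto)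
qed

lemma chain_acyc:
  assumes A: "acyclic_orientation \<I> Q" and c: "chain \<I> Q x y"
    and H: "H \<in> \<I>" "Q H = y" "x \<in> H" "x \<noteq> y"
  shows False
proof -
  obtain k Hs where h: "1 \<le> k" "\<forall>i. 1 \<le> i \<and> i \<le> k \<longrightarrow> Hs i \<in> \<I>"
      "\<forall>i. 1 \<le> i \<and> i < k \<longrightarrow> Q (Hs (Suc i)) \<in> Hs i - {Q (Hs i)}"
      "Q (Hs 1) = x" "y \<in> Hs k - {Q (Hs k)}"
    using c unfolding chain_def by blast
  define Gs where "Gs i = (if i \<le> 1 then H else Hs (i - 1))" for i
  have 1: "\<forall>i. 1 \<le> i \<and> i \<le> Suc k \<longrightarrow> Gs i \<in> \<I>"
  proof (intro allI impI)
    fix i assume i: "1 \<le> i \<and> i \<le> Suc k"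
    show "Gs i \<in> \<I>"
    proof (cases "i \<le> 1")
      case True then show ?thesis unfolding Gs_def using H(1) by auto
    next
      case False
      then have "1 \<le> i - 1 \<and> i - 1 \<le> k" using i by linarith
      then have "Hs (i - 1) \<in> \<I>" using h(2) by blast
      then show ?thesis unfolding Gs_def using False by simp
    qed
  qed
  have 2: "\<forall>i. 1 \<le> i \<and> i < Suc k \<longrightarrow> Q (Gs (Suc i)) \<in> Gs i - {Q (Gs i)}"
  proof (intro allI impI)
    fix i assume i: "1 \<le> i \<and> i < Suc k"
    show "Q (Gs (Suc i)) \<in> Gs i - {Q (Gs i)}"
    proof (cases "i = 1")
      case True then show ?thesis unfolding Gs_def using H h(4) by auto
    next
      case False
      then have e: "Suc (i - 1) = i" and r: "1 \<le> i - 1 \<and> i - 1 < k" using i by auto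
      have "Q (Hs (Suc (i - 1))) \<in> Hs (i - 1) - {Q (Hs (i - 1))}" using h(3) r by blast
      then show ?thesis unfolding Gs_def using False e by simp
    qed
  qed
  have 3: "Q (Gs 1) \<in> Gs (Suc k) - {Q (Gs (Suc k))}" unfolding Gs_def using H h(1,5) by auto
  have "2 \<le> Suc k" using h(1) by simp
  then show False using A 1 2 3 unfolding acyclic_orientation_def by blast
qed

definition Rs :: "nat set set \<Rightarrow> (nat set \<Rightarrow> nat) \<Rightarrow> (nat \<times> nat) set" where
  "Rs \<I> Q = {(a, b). a < b \<and> (\<exists>H\<in>\<I>. a \<in> H \<and> b \<in> H \<and> Q H = b)}"

definition Rt :: "nat set set \<Rightarrow> (nat set \<Rightarrow> nat) \<Rightarrow> (nat \<times> nat) set" where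
  "Rt \<I> Q = {(a, b). a < b \<and> (\<exists>H\<in>\<I>. a \<in> H \<and> b \<in> H \<and> Q H = a)}"

lemma trancl_sub_Pr:
  assumes "R \<subseteq> Pr n" shows "R\<^sup>+ \<subseteq> Pr n"
proof (rule subrelI)
  fix x y assume "(x, y) \<in> R\<^sup>+"
  then show "(x, y) \<in> Pr n"
  proof (induction rule: trancl_induct)
    case (base y) then show ?case using assms by auto
  next
    case (step y z) then show ?case using assms unfolding Pr_def by auto
  qed
qed

lemma tc_Rs:
  assumes IH: "interval_hypergraph n \<I>"
  shows "tc n ((Rs \<I> Q)\<^sup>+)"
proof -
  have s: "Rs \<I> Q \<subseteq> Pr n"
  proof (rule subrelI)
    fix a b assume "(a, b) \<in> Rs \<I> Q"
    then obtain H where "a < b" "H \<in> \<I>" "a \<in> H" "b \<in> H" unfolding Rs_def by blast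
    then show "(a, b) \<in> Pr n" using IH_sub(1)[OF IH, of H] unfolding Pr_def by auto
  qed
  have l: "Rs \<I> Q \<subseteq> {(a, b). a < b}" unfolding Rs_def by auto
  have c: "cotrans (Rs \<I> Q)" unfolding cotrans_def
  proof (intro allI impI)
    fix a b c assume h: "(a, c) \<in> Rs \<I> Q \<and> a < b \<and> b < c"
    then obtain H where H: "H \<in> \<I>" "a \<in> H" "c \<in> H" "Q H = c" unfolding Rs_def by blast
    have "b \<in> H" using IH_sub(4)[OF IH H(1) H(2) H(3), of b] h by auto
    then have "(b, c) \<in> Rs \<I> Q" using H h unfolding Rs_def by auto
    then show "(a, b) \<in> Rs \<I> Q \<or> (b, c) \<in> Rs \<I> Q" by blast
  qed
  show ?thesis unfolding tc_def using trancl_sub_Pr[OF s] cotrans_trancl[OF l c] by auto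
qed

lemma tc_Rt:
  assumes IH: "interval_hypergraph n \<I>"
  shows "tc n ((Rt \<I> Q)\<^sup>+)"
proof -
  have s: "Rt \<I> Q \<subseteq> Pr n"
  proof (rule subrelI)
    fix a b assume "(a, b) \<in> Rt \<I> Q"
    then obtain H where "a < b" "H \<in> \<I>" "a \<in> H" "b \<in> H" unfolding Rt_def by blast
    then show "(a, b) \<in> Pr n" using IH_sub(1)[OF IH, of H] unfolding Pr_def by auto
  qed
  have l: "Rt \<I> Q \<subseteq> {(a, b). a < b}" unfolding Rt_def by auto
  have c: "cotrans (Rt \<I> Q)" unfolding cotrans_def
  proof (intro allI impI)
    fix a b c assume h: "(a, c) \<in> Rt \<I> Q \<and> a < b \<and> b < c"
    then obtain H where H: "H \<in> \<I>" "a \<in> H" "c \<in> H" "Q H = a" unfolding Rt_def by blast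
    have "b \<in> H" using IH_sub(4)[OF IH H(1) H(2) H(3), of b] h by auto
    then have "(a, b) \<in> Rt \<I> Q" using H h unfolding Rt_def by auto
    then show "(a, b) \<in> Rt \<I> Q \<or> (b, c) \<in> Rt \<I> Q" by blast
  qed
  show ?thesis unfolding tc_def using trancl_sub_Pr[OF s] cotrans_trancl[OF l c] by auto
qed

lemma Rs_chain:
  assumes "(a, b) \<in> (Rs \<I> Q)\<^sup>+" shows "chain \<I> Q b a"
  using assms
proof (induction rule: trancl_induct)
  case (base y) then show ?case unfolding Rs_def by (auto intro: chain_base)
next
  case (step y z)
  have "chain \<I> Q z y" using step(2) unfolding Rs_def by (auto intro: chain_base)
  then show ?case using step(3) chain_trans by blast
qed

lemma Rt_chain:
  assumes "(a, b) \<in> (Rt \<I> Q)\<^sup>+" shows "chain \<I> Q a b"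
  using assms
proof (induction rule: trancl_induct)
  case (base y) then show ?case unfolding Rt_def by (auto intro: chain_base)
next
  case (step y z)
  have "chain \<I> Q y z" using step(2) unfolding Rt_def by (auto intro: chain_base)
  then show ?case using step(3) chain_trans by blast
qed


lemma AO_ori:
  assumes "acyclic_orientation \<I> Q"
  shows "\<And>H. H \<in> \<I> \<Longrightarrow> Q H \<in> H" "\<And>H. H \<notin> \<I> \<Longrightarrow> Q H = 0"
  using assms unfolding acyclic_orientation_def orientation_def by auto

lemma perm_inj_inv:
  assumes "\<pi> \<in> perms n" "inv \<pi> x = inv \<pi> y" shows "x = y"
  using assms perms_permutes by (metis permutes_inverses(1))

lemma sigma_char:
  assumes IH: "interval_hypergraph n \<I>" and A: "acyclic_orientation \<I> A"
  shows "sigma_of n \<I> A \<in> perms n \<and> inversions n (sigma_of n \<I> A) = (Rs \<I> A)\<^sup>+ \<and>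
         Or_perm n \<I> (sigma_of n \<I> A) = A"
proof -
  obtain \<sigma> where s: "\<sigma> \<in> perms n" "inversions n \<sigma> = (Rs \<I> A)\<^sup>+"
    using tc_perm[OF tc_Rs[OF IH]] by blast
  have Or: "Or_perm n \<I> \<sigma> = A"
  proof
    fix H show "Or_perm n \<I> \<sigma> H = A H"
    proof (cases "H \<in> \<I>")
      case False then show ?thesis using Or_out AO_ori[OF A] by metis
    next
      case H: True
      have x: "A H \<in> H" using AO_ori[OF A] H by blast
      have sub: "H \<subseteq> {1..n}" using IH_sub[OF IH H] by blast
      have "inv \<sigma> (A H) \<le> inv \<sigma> y" if y: "y \<in> H" for y
      proof (cases "y = A H")
        case True then show ?thesis by simp
      next
        case False
        have "bef ((Rs \<I> A)\<^sup>+) (A H) y"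
        proof (cases "y < A H")
          case True
          then have "(y, A H) \<in> Rs \<I> A" unfolding Rs_def using H x y by blast
          then show ?thesis using True unfolding bef_def by auto
        next
          case False2: False
          then have lt: "A H < y" using False by linarith
          have "(A H, y) \<notin> (Rs \<I> A)\<^sup>+"
          proof
            assume "(A H, y) \<in> (Rs \<I> A)\<^sup>+"
            then have "chain \<I> A y (A H)" by (rule Rs_chain)
            then show False using chain_acyc[OF A _ H _ y] False by auto
          qed
          then show ?thesis using lt unfolding bef_def by auto
        qed
        moreover have "A H \<in> {1..n}" "y \<in> {1..n}" using sub x y by auto
        ultimately have "inv \<sigma> (A H) < inv \<sigma> y"
          using pos_bef[OF s(1), of "A H" y] s(2) by simp
        then show ?thesis by simp
      qed
      then show ?thesis using Or_eqI[OF IH H s(1) x] by blast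
    qed
  qed
  have min: "weak_le n \<sigma> \<pi>" if p: "\<pi> \<in> fiber n \<I> A" for \<pi>
  proof -
    have pp: "\<pi> \<in> perms n" "Or_perm n \<I> \<pi> = A" using p unfolding fiber_def by auto
    have "Rs \<I> A \<subseteq> inversions n \<pi>"
    proof (rule subrelI)
      fix a b assume "(a, b) \<in> Rs \<I> A"
      then obtain H where H: "a < b" "H \<in> \<I>" "a \<in> H" "b \<in> H" "A H = b" unfolding Rs_def by blast
      have "inv \<pi> b \<le> inv \<pi> a" using Or_basic[OF IH H(2) pp(1)] pp(2) H by metis
      moreover have "inv \<pi> b \<noteq> inv \<pi> a" using perm_inj_inv[OF pp(1)] H(1) by force
      ultimately have "inv \<pi> b < inv \<pi> a" by simp
      moreover have "1 \<le> a" "b \<le> n" using IH_sub(1)[OF IH H(2)] H by auto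
      ultimately show "(a, b) \<in> inversions n \<pi>" unfolding inversions_def using H(1) by auto
    qed
    then have "(Rs \<I> A)\<^sup>+ \<subseteq> (inversions n \<pi>)\<^sup>+" by (rule trancl_mono_subset)
    then show ?thesis unfolding weak_le_def using s(2) weak_trans_inv[OF pp(1)] by simp
  qed
  have fib: "\<sigma> \<in> fiber n \<I> A" unfolding fiber_def using s Or by auto
  have "sigma_of n \<I> A = \<sigma>"
    unfolding sigma_of_def
  proof (rule the_equality)
    show "\<sigma> \<in> fiber n \<I> A \<and> (\<forall>\<pi>\<in>fiber n \<I> A. weak_le n \<sigma> \<pi>)" using fib min by blast
  next
    fix \<sigma>' assume h: "\<sigma>' \<in> fiber n \<I> A \<and> (\<forall>\<pi>\<in>fiber n \<I> A. weak_le n \<sigma>' \<pi>)"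
    then show "\<sigma>' = \<sigma>" using weak_antisym[of \<sigma>' n \<sigma>] min fib unfolding fiber_def by auto
  qed
  then show ?thesis using s Or by simp
qed

lemma tau_char:
  assumes IH: "interval_hypergraph n \<I>" and A: "acyclic_orientation \<I> A"
  shows "tau_of n \<I> A \<in> perms n \<and> inversions n (tau_of n \<I> A) = Pr n - (Rt \<I> A)\<^sup>+ \<and>
         Or_perm n \<I> (tau_of n \<I> A) = A"
proof -
  obtain \<tau> where s: "\<tau> \<in> perms n" "inversions n \<tau> = Pr n - (Rt \<I> A)\<^sup>+"
    using tc_perm[OF tc_compl[OF tc_Rt[OF IH]]] by blast
  have Or: "Or_perm n \<I> \<tau> = A"
  proof
    fix H show "Or_perm n \<I> \<tau> H = A H"
    proof (cases "H \<in> \<I>")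
      case False then show ?thesis using Or_out AO_ori[OF A] by metis
    next
      case H: True
      have x: "A H \<in> H" using AO_ori[OF A] H by blast
      have sub: "H \<subseteq> {1..n}" using IH_sub[OF IH H] by blast
      have "inv \<tau> (A H) \<le> inv \<tau> y" if y: "y \<in> H" for y
      proof (cases "y = A H")
        case True then show ?thesis by simp
      next
        case False
        have "bef (Pr n - (Rt \<I> A)\<^sup>+) (A H) y"
        proof (cases "y < A H")
          case True
          have "(y, A H) \<notin> (Rt \<I> A)\<^sup>+"
          proof
            assume "(y, A H) \<in> (Rt \<I> A)\<^sup>+"
            then have "chain \<I> A y (A H)" by (rule Rt_chain)
            then show False using chain_acyc[OF A _ H _ y] False by auto
          qed
          moreover have "(y, A H) \<in> Pr n" using True x y sub unfolding Pr_def by auto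
          ultimately show ?thesis using True unfolding bef_def by auto
        next
          case False2: False
          then have lt: "A H < y" using False by linarith
          then have "(A H, y) \<in> Rt \<I> A" unfolding Rt_def using H x y by blast
          then show ?thesis using lt unfolding bef_def by auto
        qed
        moreover have "A H \<in> {1..n}" "y \<in> {1..n}" using sub x y by auto
        ultimately have "inv \<tau> (A H) < inv \<tau> y"
          using pos_bef[OF s(1), of "A H" y] s(2) by simp
        then show ?thesis by simp
      qed
      then show ?thesis using Or_eqI[OF IH H s(1) x] by blast
    qed
  qed
  have max: "weak_le n \<pi> \<tau>" if p: "\<pi> \<in> fiber n \<I> A" for \<pi>
  proof -
    have pp: "\<pi> \<in> perms n" "Or_perm n \<I> \<pi> = A" using p unfolding fiber_def by auto
    have "Rt \<I> A \<subseteq> Pr n - inversions n \<pi>"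
    proof (rule subrelI)
      fix a b assume "(a, b) \<in> Rt \<I> A"
      then obtain H where H: "a < b" "H \<in> \<I>" "a \<in> H" "b \<in> H" "A H = a" unfolding Rt_def by blast
      have "inv \<pi> a \<le> inv \<pi> b" using Or_basic[OF IH H(2) pp(1)] pp(2) H by metis
      moreover have "1 \<le> a" "b \<le> n" using IH_sub(1)[OF IH H(2)] H by auto
      ultimately show "(a, b) \<in> Pr n - inversions n \<pi>" unfolding inversions_def Pr_def using H(1) by auto
    qed
    then have "(Rt \<I> A)\<^sup>+ \<subseteq> (Pr n - inversions n \<pi>)\<^sup>+" by (rule trancl_mono_subset)
    moreover have "trans (Pr n - inversions n \<pi>)" using tc_compl[OF inv_tc[OF pp(1)]] unfolding tc_def by blast
    ultimately have "(Rt \<I> A)\<^sup>+ \<subseteq> Pr n - inversions n \<pi>" by simp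
    moreover have "inversions n \<pi> \<subseteq> Pr n" using inv_tc[OF pp(1)] unfolding tc_def by blast
    ultimately show ?thesis unfolding weak_le_def using s(2) by auto
  qed
  have fib: "\<tau> \<in> fiber n \<I> A" unfolding fiber_def using s Or by auto
  have "tau_of n \<I> A = \<tau>"
    unfolding tau_of_def
  proof (rule the_equality)
    show "\<tau> \<in> fiber n \<I> A \<and> (\<forall>\<pi>\<in>fiber n \<I> A. weak_le n \<pi> \<tau>)" using fib max by blast
  next
    fix \<tau>' assume h: "\<tau>' \<in> fiber n \<I> A \<and> (\<forall>\<pi>\<in>fiber n \<I> A. weak_le n \<pi> \<tau>')"
    then show "\<tau>' = \<tau>" using weak_antisym[of \<tau>' n \<tau>] max fib unfolding fiber_def by auto
  qed
  then show ?thesis using s Or by simp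
qed

lemma key:
  assumes IH: "interval_hypergraph n \<I>" and CI: "closed_under_intersection \<I>"
    and A: "acyclic_orientation \<I> A" and W: "acyclic_orientation \<I> W"
    and le: "\<forall>H\<in>\<I>. A H \<le> W H"
  shows "(Rs \<I> A)\<^sup>+ \<subseteq> Pr n - (Rt \<I> W)\<^sup>+"
proof -
  have tr: "trans (Pr n - (Rt \<I> W)\<^sup>+)" using tc_compl[OF tc_Rt[OF IH]] unfolding tc_def by blast
  have "Rs \<I> A \<subseteq> Pr n - (Rt \<I> W)\<^sup>+"
  proof (rule subrelI)
    fix a b assume "(a, b) \<in> Rs \<I> A"
    then obtain H where H: "a < b" "H \<in> \<I>" "a \<in> H" "b \<in> H" "A H = b" unfolding Rs_def by blast
    have inPr: "(a, b) \<in> Pr n" using IH_sub(1)[OF IH H(2)] H unfolding Pr_def by auto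
    have "(a, b) \<notin> (Rt \<I> W)\<^sup>+"
    proof
      assume "(a, b) \<in> (Rt \<I> W)\<^sup>+"
      then obtain c where c: "(a, c) \<in> (Rt \<I> W)\<^sup>*" "(c, b) \<in> Rt \<I> W" using tranclD2 by metis
      have ac: "a \<le> c" using rtrancl_le[OF _ c(1)] unfolding Rt_def by auto
      obtain G where G: "c < b" "G \<in> \<I>" "c \<in> G" "b \<in> G" "W G = c" using c(2) unfolding Rt_def by blast
      have cH: "c \<in> H" using IH_sub(4)[OF IH H(2) H(3) H(4), of c] ac G(1) by auto
      have K: "G \<inter> H \<in> \<I>" using CI G(2) H(2) G(4) H(4) unfolding closed_under_intersection_def by blast
      have "W (G \<inter> H) = c" using hered[OF W K G(2) _ ] G cH by auto
      moreover have "A (G \<inter> H) = b" using hered[OF A K H(2)] H G by auto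
      ultimately show False using le K G(1) by fastforce
    qed
    then show "(a, b) \<in> Pr n - (Rt \<I> W)\<^sup>+" using inPr by blast
  qed
  then have "(Rs \<I> A)\<^sup>+ \<subseteq> (Pr n - (Rt \<I> W)\<^sup>+)\<^sup>+" by (rule trancl_mono_subset)
  then show ?thesis using tr by simp
qed

lemma P_le_pointwise:
  assumes "P_le n \<I> A B"
  shows "A H \<le> B H"
  using assms unfolding P_le_def
proof (induction rule: rtranclp_induct)
  case base then show ?case by simp
next
  case (step Q Q')
  have "Q H \<le> Q' H"
  proof (cases "H \<in> \<I>")
    case True
    then show ?thesis using step(2) unfolding increasing_flip_def by (metis less_imp_le order_refl)
  next
    case False
    then show ?thesis using step(2) AO_ori by (metis order_refl)
  qed
  then show ?case using step(3) by simp
qed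


lemma perm_range:
  assumes "\<pi> \<in> perms n" "x \<in> {1..n}"
  shows "\<pi> x \<in> {1..n}" "inv \<pi> x \<in> {1..n}"
proof -
  have pp: "\<pi> permutes {1..n}" using assms(1) perms_permutes by auto
  show "\<pi> x \<in> {1..n}" using permutes_in_image[OF pp] assms(2) by blast
  show "inv \<pi> x \<in> {1..n}" using permutes_in_image[OF permutes_inv[OF pp]] assms(2) by blast
qed

lemma swap_inv:
  assumes p: "\<pi> \<in> perms n" and k: "1 \<le> k" "k < n"
  shows "\<pi> \<circ> transpose k (Suc k) \<in> perms n"
    "inv (\<pi> \<circ> transpose k (Suc k)) = (\<lambda>x. transpose k (Suc k) (inv \<pi> x))"
proof -
  have pp: "\<pi> permutes {1..n}" using p perms_permutes by auto
  have t: "transpose k (Suc k) permutes {1..n}" using k by (intro permutes_swap_id) auto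
  show "\<pi> \<circ> transpose k (Suc k) \<in> perms n" using permutes_compose[OF t pp] unfolding perms_def by auto
  have "inv (\<pi> \<circ> transpose k (Suc k)) = inv (transpose k (Suc k)) \<circ> inv \<pi>"
    using o_inv_distrib[OF permutes_bij[OF pp] bij_transpose] .
  then show "inv (\<pi> \<circ> transpose k (Suc k)) = (\<lambda>x. transpose k (Suc k) (inv \<pi> x))"
    by (simp add: o_def)
qed

lemma swap_order:
  fixes p :: "nat \<Rightarrow> nat"
  assumes pa: "p a = k" and pb: "p b = Suc k"
    and inj: "\<And>x y. p x = p y \<Longrightarrow> x = y"
    and ne: "\<not> (x = a \<and> y = b)" "\<not> (x = b \<and> y = a)"
  shows "(transpose k (Suc k) (p y) < transpose k (Suc k) (p x)) = (p y < p x)"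
proof -
  have xa: "p x = k \<longleftrightarrow> x = a" "p y = k \<longleftrightarrow> y = a" using pa inj by auto
  have xb: "p x = Suc k \<longleftrightarrow> x = b" "p y = Suc k \<longleftrightarrow> y = b" using pb inj by auto
  show ?thesis unfolding transpose_def using xa xb ne by auto
qed

lemma swap_step:
  assumes IH: "interval_hypergraph n \<I>" and p: "\<pi> \<in> perms n" and k: "1 \<le> k" "k < n"
    and ab: "\<pi> k < \<pi> (Suc k)"
  defines "\<pi>' \<equiv> \<pi> \<circ> transpose k (Suc k)"
  shows "\<pi>' \<in> perms n" "inversions n \<pi>' = insert (\<pi> k, \<pi> (Suc k)) (inversions n \<pi>)"
    "P_le n \<I> (Or_perm n \<I> \<pi>) (Or_perm n \<I> \<pi>')"
proof -
  have pp: "\<pi> permutes {1..n}" using p perms_permutes by auto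
  define a where "a = \<pi> k"
  define b where "b = \<pi> (Suc k)"
  let ?p = "inv \<pi>"
  let ?p' = "\<lambda>x. transpose k (Suc k) (inv \<pi> x)"
  have p'd: "\<pi>' \<in> perms n" "inv \<pi>' = ?p'" using swap_inv[OF p k] unfolding \<pi>'_def by auto
  show "\<pi>' \<in> perms n" using p'd by simp
  have pa: "?p a = k" and pb: "?p b = Suc k" unfolding a_def b_def using permutes_inverses(2)[OF pp] by auto
  have inj: "\<And>x y. ?p x = ?p y \<Longrightarrow> x = y" using perm_inj_inv[OF p] by blast
  have ab': "a < b" using ab unfolding a_def b_def .
  have abn: "a \<in> {1..n}" "b \<in> {1..n}" unfolding a_def b_def using perm_range(1)[OF p] k by auto
  have "inversions n \<pi>' = insert (a, b) (inversions n \<pi>)"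
  proof (intro equalityI subsetI)
    fix q assume "q \<in> inversions n \<pi>'"
    then obtain x y where q: "q = (x, y)" "1 \<le> x" "x < y" "y \<le> n" "?p' y < ?p' x"
      unfolding inversions_def p'd by auto
    show "q \<in> insert (a, b) (inversions n \<pi>)"
    proof (cases "x = a \<and> y = b")
      case True then show ?thesis using q by simp
    next
      case False
      have "\<not> (x = b \<and> y = a)" using q ab' by auto
      then have "?p y < ?p x" using swap_order[where p="inv \<pi>" and a=a and b=b and k=k, OF pa pb inj False] q by simp
      then show ?thesis using q unfolding inversions_def by auto
    qed
  next
    fix q assume "q \<in> insert (a, b) (inversions n \<pi>)"
    then consider "q = (a, b)" | "q \<in> inversions n \<pi>" by blast
    then show "q \<in> inversions n \<pi>'"
    proof cases
      case 1 then show ?thesis unfolding inversions_def p'd using pa pb ab' abn by auto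
    next
      case 2
      then obtain x y where q: "q = (x, y)" "1 \<le> x" "x < y" "y \<le> n" "?p y < ?p x"
        unfolding inversions_def by auto
      have "\<not> (x = a \<and> y = b)" using q pa pb by auto
      moreover have "\<not> (x = b \<and> y = a)" using q ab' by auto
      ultimately have "?p' y < ?p' x" using swap_order[where p="inv \<pi>" and a=a and b=b and k=k, OF pa pb inj] q by simp
      then show ?thesis using q unfolding inversions_def p'd by auto
    qed
  qed
  then show "inversions n \<pi>' = insert (\<pi> k, \<pi> (Suc k)) (inversions n \<pi>)" unfolding a_def b_def .
  have Or': "Or_perm n \<I> \<pi>' H = (if a \<in> H \<and> b \<in> H \<and> Or_perm n \<I> \<pi> H = a then b else Or_perm n \<I> \<pi> H)"
    if H: "H \<in> \<I>" for H
  proof -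
    let ?x = "Or_perm n \<I> \<pi> H"
    have xb: "?x \<in> H" "\<forall>y\<in>H. ?p ?x \<le> ?p y" using Or_basic[OF IH H p] by auto
    show ?thesis
    proof (cases "a \<in> H \<and> b \<in> H \<and> ?x = a")
      case True
      have "\<forall>y\<in>H. ?p' b \<le> ?p' y"
      proof
        fix y assume y: "y \<in> H"
        have "k \<le> ?p y" using xb(2) y True pa by auto
        then show "?p' b \<le> ?p' y" using pb unfolding transpose_def by auto
      qed
      then have "Or_perm n \<I> \<pi>' H = b" using Or_eqI[OF IH H p'd(1)] True p'd(2) by auto
      then show ?thesis using True by simp
    next
      case False
      have "\<forall>y\<in>H. ?p' ?x \<le> ?p' y"
      proof
        fix y assume y: "y \<in> H"
        have le: "?p ?x \<le> ?p y" using xb(2) y by auto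
        consider "?x = a" "b \<notin> H" | "?x = b" | "?x \<noteq> a" "?x \<noteq> b" using False xb(1) by blast
        then show "?p' ?x \<le> ?p' y"
        proof cases
          case 1
          have "y \<noteq> b" using 1 y by auto
          then have "?p y \<noteq> Suc k" using pb inj by auto
          then show ?thesis using le 1 pa unfolding transpose_def by auto
        next
          case 2
          have "a \<notin> H" using 2 xb(2) pa pb by force
          then have "?p y \<noteq> k" using y pa inj by auto
          then show ?thesis using le 2 pb unfolding transpose_def by auto
        next
          case 3
          then have "?p ?x \<noteq> k" "?p ?x \<noteq> Suc k" using pa pb inj by auto
          then show ?thesis using le unfolding transpose_def by auto
        qed
      qed
      then have h: "Or_perm n \<I> \<pi>' H = ?x" using Or_eqI[OF IH H p'd(1) xb(1)] p'd(2) by auto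
      show ?thesis unfolding if_not_P[OF False] using h .
    qed
  qed
  have AO1: "acyclic_orientation \<I> (Or_perm n \<I> \<pi>)" using Or_AO[OF IH p] .
  have AO2: "acyclic_orientation \<I> (Or_perm n \<I> \<pi>')" using Or_AO[OF IH p'd(1)] .
  show "P_le n \<I> (Or_perm n \<I> \<pi>) (Or_perm n \<I> \<pi>')"
  proof (cases "Or_perm n \<I> \<pi> = Or_perm n \<I> \<pi>'")
    case True then show ?thesis unfolding P_le_def by simp
  next
    case False
    have fl: "\<forall>H\<in>\<I>. (Or_perm n \<I> \<pi> H \<noteq> Or_perm n \<I> \<pi>' H \<longrightarrow> Or_perm n \<I> \<pi> H = a \<and> Or_perm n \<I> \<pi>' H = b) \<and>
       ({a, b} \<subseteq> H \<longrightarrow> (Or_perm n \<I> \<pi> H = a) = (Or_perm n \<I> \<pi>' H = b))"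
    proof
      fix H assume H: "H \<in> \<I>"
      have nb: "a \<in> H \<Longrightarrow> Or_perm n \<I> \<pi> H \<noteq> b"
        using Or_basic[OF IH H p] pa pb by force
      show "(Or_perm n \<I> \<pi> H \<noteq> Or_perm n \<I> \<pi>' H \<longrightarrow> Or_perm n \<I> \<pi> H = a \<and> Or_perm n \<I> \<pi>' H = b) \<and>
       ({a, b} \<subseteq> H \<longrightarrow> (Or_perm n \<I> \<pi> H = a) = (Or_perm n \<I> \<pi>' H = b))"
        using Or'[OF H] nb by auto
    qed
    have "increasing_flip n \<I> (Or_perm n \<I> \<pi>) (Or_perm n \<I> \<pi>')"
      unfolding increasing_flip_def
    proof (rule conjI[OF False], rule exI[of _ a], rule exI[of _ b], intro conjI)
      show "1 \<le> a" "a < b" "b \<le> n" using abn ab' by auto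
    qed (rule fl)
    then show ?thesis unfolding P_le_def using AO1 AO2 by (simp add: r_into_rtranclp)
  qed
qed

lemma adjacent_exists:
  assumes p: "\<pi> \<in> perms n" and r: "\<rho> \<in> perms n"
    and sub: "inversions n \<pi> \<subseteq> inversions n \<rho>" and ne: "inversions n \<pi> \<noteq> inversions n \<rho>"
  shows "\<exists>k. 1 \<le> k \<and> k < n \<and> \<pi> k < \<pi> (Suc k) \<and> (\<pi> k, \<pi> (Suc k)) \<in> inversions n \<rho>"
proof (rule ccontr)
  assume H: "\<not> ?thesis"
  have pp: "\<pi> permutes {1..n}" using p perms_permutes by auto
  have adj: "inv \<rho> (\<pi> i) < inv \<rho> (\<pi> (Suc i))" if i: "1 \<le> i" "i < n" for i
  proof -
    let ?u = "\<pi> i" and ?v = "\<pi> (Suc i)"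
    have un: "?u \<in> {1..n}" "?v \<in> {1..n}" using perm_range(1)[OF p] i by auto
    have uv: "?u \<noteq> ?v" using permutes_inj[OF pp] by (metis injD n_not_Suc_n)
    have qne: "inv \<rho> ?u \<noteq> inv \<rho> ?v" using perm_inj_inv[OF r] uv by blast
    consider "?u < ?v" | "?v < ?u" using uv by linarith
    then show ?thesis
    proof cases
      case 1
      then have "(?u, ?v) \<notin> inversions n \<rho>" using H i by blast
      then have "\<not> inv \<rho> ?v < inv \<rho> ?u" using 1 un unfolding inversions_def by auto
      then show ?thesis using qne by simp
    next
      case 2
      have "inv \<pi> ?u < inv \<pi> ?v" using permutes_inverses(2)[OF pp] by simp
      then have "(?v, ?u) \<in> inversions n \<pi>" using 2 un unfolding inversions_def by auto
      then have "(?v, ?u) \<in> inversions n \<rho>" using sub by blast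
      then show ?thesis unfolding inversions_def by auto
    qed
  qed
  have chainp: "inv \<rho> (\<pi> i) < inv \<rho> (\<pi> (Suc i + m))" if i: "1 \<le> i" "Suc i + m \<le> n" for i m
    using i
  proof (induction m)
    case 0 then show ?case using adj by simp
  next
    case (Suc m)
    then have "inv \<rho> (\<pi> i) < inv \<rho> (\<pi> (Suc i + m))" by simp
    moreover have "inv \<rho> (\<pi> (Suc i + m)) < inv \<rho> (\<pi> (Suc (Suc i + m)))"
      using adj[of "Suc i + m"] Suc.prems by simp
    ultimately show ?case by simp
  qed
  have "inversions n \<rho> \<subseteq> inversions n \<pi>"
  proof (rule subrelI)
    fix x y assume xy: "(x, y) \<in> inversions n \<rho>"
    then have xy': "1 \<le> x" "x < y" "y \<le> n" "inv \<rho> y < inv \<rho> x" unfolding inversions_def by auto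
    have xn: "x \<in> {1..n}" "y \<in> {1..n}" using xy' by auto
    let ?i = "inv \<pi> x" and ?j = "inv \<pi> y"
    have ij: "?i \<in> {1..n}" "?j \<in> {1..n}" using perm_range(2)[OF p] xn by auto
    have "?i \<noteq> ?j" using xy' by (metis pp less_irrefl permutes_inverses(1))
    moreover have "\<not> ?i < ?j"
    proof
      assume "?i < ?j"
      then obtain m where "?j = Suc ?i + m" using less_iff_Suc_add by auto
      then have "inv \<rho> (\<pi> ?i) < inv \<rho> (\<pi> ?j)" using chainp[of ?i m] ij by simp
      then show False using xy' permutes_inverses(1)[OF pp] by simp
    qed
    ultimately have "?j < ?i" by simp
    then show "(x, y) \<in> inversions n \<pi>" using xy' unfolding inversions_def by auto
  qed
  then show False using sub ne by blast
qed

lemma Or_mono: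
  assumes IH: "interval_hypergraph n \<I>" and p: "\<pi> \<in> perms n" and r: "\<rho> \<in> perms n"
    and le: "weak_le n \<pi> \<rho>"
  shows "P_le n \<I> (Or_perm n \<I> \<pi>) (Or_perm n \<I> \<rho>)"
proof -
  have "\<And>\<pi>. \<pi> \<in> perms n \<Longrightarrow> weak_le n \<pi> \<rho> \<Longrightarrow> card (inversions n \<rho> - inversions n \<pi>) = d
        \<Longrightarrow> P_le n \<I> (Or_perm n \<I> \<pi>) (Or_perm n \<I> \<rho>)" for d
  proof (induction d)
    case 0
    have fin: "finite (inversions n \<rho> - inversions n \<pi>)"
      by (rule finite_subset[OF _ finite_Pr]) (unfold inversions_def Pr_def, auto)
    then have "inversions n \<rho> \<subseteq> inversions n \<pi>" using 0 by auto
    then have "\<pi> = \<rho>" using inv_inj[OF 0(1) r] 0(2) unfolding weak_le_def by blast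
    then show ?case unfolding P_le_def by simp
  next
    case (Suc d \<pi>)
    have ne: "inversions n \<pi> \<noteq> inversions n \<rho>" using Suc.prems(3) by auto
    obtain k where k: "1 \<le> k" "k < n" "\<pi> k < \<pi> (Suc k)" "(\<pi> k, \<pi> (Suc k)) \<in> inversions n \<rho>"
      using adjacent_exists[OF Suc.prems(1) r _ ne] Suc.prems(2) unfolding weak_le_def by blast
    let ?\<pi>' = "\<pi> \<circ> transpose k (Suc k)"
    note st = swap_step[OF IH Suc.prems(1) k(1,2,3)]
    have nin: "(\<pi> k, \<pi> (Suc k)) \<notin> inversions n \<pi>"
      using permutes_inverses(2)[OF perms_permutes[OF Suc.prems(1)]] unfolding inversions_def by auto
    have w: "weak_le n ?\<pi>' \<rho>" using st(2) k(4) Suc.prems(2) unfolding weak_le_def by auto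
    have "inversions n \<rho> - inversions n ?\<pi>' = (inversions n \<rho> - inversions n \<pi>) - {(\<pi> k, \<pi> (Suc k))}"
      using st(2) by auto
    moreover have "finite (inversions n \<rho> - inversions n \<pi>)"
      by (rule finite_subset[OF _ finite_Pr]) (unfold inversions_def Pr_def, auto)
    ultimately have "card (inversions n \<rho> - inversions n ?\<pi>') = d"
      using Suc.prems(3) k(4) nin by simp
    then have "P_le n \<I> (Or_perm n \<I> ?\<pi>') (Or_perm n \<I> \<rho>)" using Suc.IH[OF st(1) w] by blast
    then show ?case using st(3) unfolding P_le_def by simp
  qed
  then show ?thesis using p le by blast
qed


theorem proposition4p11:
  fixes n :: nat and \<I> :: "nat set set"
  assumes "interval_hypergraph n \<I>" and "closed_under_intersection \<I>"
  defines "AO \<equiv> {Q. acyclic_orientation \<I> Q}"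
  shows "(\<forall>A\<in>AO. \<forall>B\<in>AO. P_le n \<I> A B \<and> P_le n \<I> B A \<longrightarrow> A = B) \<and>
    (\<forall>A\<in>AO. \<forall>B\<in>AO.
       (\<exists>\<pi>. is_lub_on (perms n) (weak_le n) \<pi> (sigma_of n \<I> A) (sigma_of n \<I> B) \<and>
             is_lub_on AO (P_le n \<I>) (Or_perm n \<I> \<pi>) A B) \<and>
       (\<exists>\<pi>. is_glb_on (perms n) (weak_le n) \<pi> (tau_of n \<I> A) (tau_of n \<I> B) \<and>
             is_glb_on AO (P_le n \<I>) (Or_perm n \<I> \<pi>) A B))"
proof (intro conjI ballI impI)
  note IH = assms(1) and CI = assms(2)
  fix A B assume A: "A \<in> AO" and B: "B \<in> AO" and h: "P_le n \<I> A B \<and> P_le n \<I> B A"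
  show "A = B"
  proof
    fix H show "A H = B H" using P_le_pointwise[of n \<I> A B H] P_le_pointwise[of n \<I> B A H] h by simp
  qed
next
  note IH = assms(1) and CI = assms(2)
  have sw: "weak_le n (sigma_of n \<I> X) (tau_of n \<I> Y)"
    if X: "X \<in> AO" and Y: "Y \<in> AO" and le: "P_le n \<I> X Y" for X Y
  proof -
    have X': "acyclic_orientation \<I> X" and Y': "acyclic_orientation \<I> Y" using X Y unfolding AO_def by auto
    have "\<forall>H\<in>\<I>. X H \<le> Y H" using P_le_pointwise[OF le] by blast
    then have "(Rs \<I> X)\<^sup>+ \<subseteq> Pr n - (Rt \<I> Y)\<^sup>+" using key[OF IH CI X' Y'] by blast
    then show ?thesis unfolding weak_le_def using sigma_char[OF IH X'] tau_char[OF IH Y'] by simp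
  qed
  fix A B assume A: "A \<in> AO" and B: "B \<in> AO"
  have A': "acyclic_orientation \<I> A" and B': "acyclic_orientation \<I> B" using A B unfolding AO_def by auto
  note sA = sigma_char[OF IH A'] and sB = sigma_char[OF IH B']
  note tA = tau_char[OF IH A'] and tB = tau_char[OF IH B']
  show "\<exists>\<pi>. is_lub_on (perms n) (weak_le n) \<pi> (sigma_of n \<I> A) (sigma_of n \<I> B) \<and>
             is_lub_on AO (P_le n \<I>) (Or_perm n \<I> \<pi>) A B"
  proof -
    obtain \<pi> where lub: "is_lub_on (perms n) (weak_le n) \<pi> (sigma_of n \<I> A) (sigma_of n \<I> B)"
      using weak_join sA sB by blast
    have p: "\<pi> \<in> perms n" using lub unfolding is_lub_on_def by blast
    have "is_lub_on AO (P_le n \<I>) (Or_perm n \<I> \<pi>) A B"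
      unfolding is_lub_on_def
    proof (intro conjI ballI impI)
      show "Or_perm n \<I> \<pi> \<in> AO" using Or_AO[OF IH p] unfolding AO_def by simp
      show "P_le n \<I> A (Or_perm n \<I> \<pi>)"
        using Or_mono[OF IH _ p, of "sigma_of n \<I> A"] sA lub unfolding is_lub_on_def by simp
      show "P_le n \<I> B (Or_perm n \<I> \<pi>)"
        using Or_mono[OF IH _ p, of "sigma_of n \<I> B"] sB lub unfolding is_lub_on_def by simp
    next
      fix W assume W: "W \<in> AO" and hw: "P_le n \<I> A W \<and> P_le n \<I> B W"
      have W': "acyclic_orientation \<I> W" using W unfolding AO_def by auto
      note tW = tau_char[OF IH W']
      have "weak_le n \<pi> (tau_of n \<I> W)"
        using lub sw[OF A W] sw[OF B W] hw tW unfolding is_lub_on_def by blast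
      then show "P_le n \<I> (Or_perm n \<I> \<pi>) W" using Or_mono[OF IH p, of "tau_of n \<I> W"] tW by simp
    qed
    then show ?thesis using lub by blast
  qed
  show "\<exists>\<pi>. is_glb_on (perms n) (weak_le n) \<pi> (tau_of n \<I> A) (tau_of n \<I> B) \<and>
             is_glb_on AO (P_le n \<I>) (Or_perm n \<I> \<pi>) A B"
  proof -
    obtain \<pi> where glb: "is_glb_on (perms n) (weak_le n) \<pi> (tau_of n \<I> A) (tau_of n \<I> B)"
      using weak_meet tA tB by blast
    have p: "\<pi> \<in> perms n" using glb unfolding is_glb_on_def by blast
    have "is_glb_on AO (P_le n \<I>) (Or_perm n \<I> \<pi>) A B"
      unfolding is_glb_on_def
    proof (intro conjI ballI impI)
      show "Or_perm n \<I> \<pi> \<in> AO" using Or_AO[OF IH p] unfolding AO_def by simp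
      show "P_le n \<I> (Or_perm n \<I> \<pi>) A"
        using Or_mono[OF IH p _, of "tau_of n \<I> A"] tA glb unfolding is_glb_on_def by simp
      show "P_le n \<I> (Or_perm n \<I> \<pi>) B"
        using Or_mono[OF IH p _, of "tau_of n \<I> B"] tB glb unfolding is_glb_on_def by simp
    next
      fix W assume W: "W \<in> AO" and hw: "P_le n \<I> W A \<and> P_le n \<I> W B"
      have W': "acyclic_orientation \<I> W" using W unfolding AO_def by auto
      note sW = sigma_char[OF IH W']
      have "weak_le n (sigma_of n \<I> W) \<pi>"
        using glb sw[OF W A] sw[OF W B] hw sW unfolding is_glb_on_def by blast
      then show "P_le n \<I> W (Or_perm n \<I> \<pi>)" using Or_mono[OF IH _ p, of "sigma_of n \<I> W"] sW by simp
    qed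
    then show ?thesis using glb by blast
  qed
qed

end
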